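(* Let $E_n$ ($n\geq1$) and $E_0$ be measurable subsets of $\mathbb{R}^d$ such that $|E_n\,\Delta\,E_0|\to 0$ and $d_H(\partial E_n,\partial E_0)\to 0$. Then also $d_H(E_n,E_0)\to0$.
   Context: $\partial E$ denotes the topological boundary of $E$; $|\cdot|$ is Lebesgue measure. $d_H(E,F)=\max\{\sup_{x\in E}\operatorname{dist}(x,F),\sup_{y\in F}\operatorname{dist}(y,E)\}$ is the Hausdorff distance. *)

theory Defs
  imports "HOL-Analysis.Analysis"
begin

text \<open>Distance from a point to a set, with the convention dist(x, {}) = +infinity.\<close>
definition setdist_pt :: "'a::metric_space \<Rightarrow> 'a set \<Rightarrow> ennreal" where
  "setdist_pt x F = (INF y\<in>F. ennreal (dist x y))"

text \<open>Hausdorff distance (possibly infinite), with sup over the empty set = 0.\<close>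
definition hausdorff_dist :: "'a::metric_space set \<Rightarrow> 'a set \<Rightarrow> ennreal" where
  "hausdorff_dist E F = max (SUP x\<in>E. setdist_pt x F) (SUP y\<in>F. setdist_pt y E)"

end

theory Submission
  imports Defs
begin

lemma ball_meas_pos:
  fixes c :: "'a::euclidean_space"
  assumes "r > 0"
  shows "emeasure lebesgue (ball c r) = emeasure lebesgue (ball (0::'a) r)"
    and "emeasure lebesgue (ball (0::'a) r) > 0"
proof -
  show "emeasure lebesgue (ball c r) = emeasure lebesgue (ball (0::'a) r)"
    using emeasure_lebesgue_ball_conv_unit_ball[of r c] emeasure_lebesgue_ball_conv_unit_ball[of r "0::'a"] assms
    by simp
  have "measure lborel (ball (0::'a) r) > 0" using content_ball_pos assms by blast
  moreover have e: "emeasure lebesgue (ball (0::'a) r) = emeasure lborel (ball (0::'a) r)" by simp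
  ultimately show "emeasure lebesgue (ball (0::'a) r) > 0"
  proof -
    assume m: "measure lborel (ball (0::'a) r) > 0"
    show ?thesis
    proof (rule ccontr)
      assume "\<not> ?thesis"
      then have "emeasure lborel (ball (0::'a) r) = 0" using e by simp
      then have "measure lborel (ball (0::'a) r) = 0" by (simp add: measure_def)
      with m show False by simp
    qed
  qed
qed

lemma one_side:
  fixes A B :: "'a::euclidean_space set"
  assumes d: "d > 0"
    and M: "emeasure lebesgue ((A - B) \<union> (B - A)) < emeasure lebesgue (ball (0::'a) (d/2))"
    and Mm: "(A - B) \<union> (B - A) \<in> sets lebesgue"
    and H: "\<And>z. z \<in> frontier A \<Longrightarrow> \<exists>w\<in>frontier B. dist z w < d/2"
    and x: "x \<in> A"
  shows "\<exists>y\<in>B. dist x y < d"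
proof (rule ccontr)
  assume nx: "\<not> (\<exists>y\<in>B. dist x y < d)"
  show False
  proof (cases "ball x (d/2) \<subseteq> A")
    case True
    have "ball x (d/2) \<inter> B = {}"
    proof (rule ccontr)
      assume "ball x (d/2) \<inter> B \<noteq> {}"
      then obtain y where "y \<in> B" "dist x y < d/2" by auto
      then show False using nx d by force
    qed
    then have "ball x (d/2) \<subseteq> (A - B) \<union> (B - A)" using True by blast
    then have "emeasure lebesgue (ball x (d/2)) \<le> emeasure lebesgue ((A - B) \<union> (B - A))"
      by (rule emeasure_mono[OF _ Mm])
    then show False using M ball_meas_pos(1)[of "d/2" x] d by simp
  next
    case False
    then obtain u where u: "u \<in> ball x (d/2)" "u \<notin> A" by blast
    have "closed_segment x u \<inter> frontier A \<noteq> {}"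
      using connected_Int_frontier[OF connected_segment, of x u A] x u by auto
    then obtain z where z: "z \<in> closed_segment x u" "z \<in> frontier A" by auto
    have "closed_segment x u \<subseteq> ball x (d/2)"
      by (rule convex_contains_segment[THEN iffD1, OF convex_ball, rule_format]) (use u d in auto)
    with z have xz: "dist x z < d/2" by auto
    obtain w where w: "w \<in> frontier B" "dist z w < d/2" using H z by blast
    have xw: "dist x w < d" using xz w dist_triangle[of x w z] by linarith
    have "w \<in> closure B" using w frontier_def by auto
    then obtain y where y: "y \<in> B" "dist y w < d - dist x w"
      using xw by (metis closure_approachable diff_gt_0_iff_gt)
    have "dist x y < d" using y xw dist_triangle[of x y w] by (simp add: dist_commute)
    then show False using nx y by blast
  qed
qed

lemma hd_comm: "hausdorff_dist A B = hausdorff_dist B A"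
  unfolding hausdorff_dist_def by (simp add: max.commute)

lemma hd_lt:
  fixes A B :: "'a::metric_space set"
  assumes "hausdorff_dist A B < ennreal e" "z \<in> A"
  shows "\<exists>w\<in>B. dist z w < e"
proof -
  have "setdist_pt z B \<le> hausdorff_dist A B"
    unfolding hausdorff_dist_def using assms(2) by (meson SUP_upper max.cobounded1 order_trans)
  then have "(INF y\<in>B. ennreal (dist z y)) < ennreal e" using assms(1) unfolding setdist_pt_def by simp
  then obtain w where "w \<in> B" "ennreal (dist z w) < ennreal e" by (auto simp: INF_less_iff)
  then show ?thesis by (auto simp: ennreal_less_iff)
qed

lemma hd_le:
  fixes A B :: "'a::metric_space set"
  assumes "\<forall>x\<in>A. \<exists>y\<in>B. dist x y < d" "\<forall>x\<in>B. \<exists>y\<in>A. dist x y < d"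
  shows "hausdorff_dist A B \<le> ennreal d"
proof -
  have *: "setdist_pt x T \<le> ennreal d" if h: "\<exists>y\<in>T. dist x y < d" for x and T :: "'a set"
  proof -
    obtain y where "y \<in> T" "dist x y < d" using h by blast
    then show ?thesis unfolding setdist_pt_def
      by (meson INF_lower2 ennreal_leI less_imp_le)
  qed
  show ?thesis unfolding hausdorff_dist_def
    using assms * by (auto intro!: SUP_least)
qed

theorem proposition2p5:
  fixes E :: "nat \<Rightarrow> 'a::euclidean_space set" and E0 :: "'a set"
  assumes meas: "\<And>n. E n \<in> sets lebesgue" and meas0: "E0 \<in> sets lebesgue"
    and symdiff: "(\<lambda>n. emeasure lebesgue ((E n - E0) \<union> (E0 - E n))) \<longlonglongrightarrow> 0"
    and bdry: "(\<lambda>n. hausdorff_dist (frontier (E n)) (frontier E0)) \<longlonglongrightarrow> 0"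
  shows "(\<lambda>n. hausdorff_dist (E n) E0) \<longlonglongrightarrow> 0"
proof (rule order_tendstoI)
  fix a :: ennreal assume "a < 0" then show "\<forall>\<^sub>F n in sequentially. a < hausdorff_dist (E n) E0" by simp
next
  fix e :: ennreal assume "0 < e"
  then obtain d' where d': "0 < d'" "d' < e" using dense by blast
  define d where "d = enn2real d'"
  have dfin: "d' \<noteq> \<infinity>" using d' top.not_eq_extremum by fastforce
  have dpos: "d > 0" using d' dfin unfolding d_def by (simp add: enn2real_positive_iff less_top)
  have dd: "ennreal d = d'" using dfin unfolding d_def by (simp add: less_top)
  have "ennreal (d/2) > 0" using dpos by simp
  then have ev1: "\<forall>\<^sub>F n in sequentially. hausdorff_dist (frontier (E n)) (frontier E0) < ennreal (d/2)"
    using order_tendstoD(2)[OF bdry] by blast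
  have ev2: "\<forall>\<^sub>F n in sequentially. emeasure lebesgue ((E n - E0) \<union> (E0 - E n)) < emeasure lebesgue (ball (0::'a) (d/2))"
    using order_tendstoD(2)[OF symdiff] ball_meas_pos(2)[of "d/2"] dpos by simp
  show "\<forall>\<^sub>F n in sequentially. hausdorff_dist (E n) E0 < e"
    using ev1 ev2
  proof eventually_elim
    case (elim n)
    have m1: "(E n - E0) \<union> (E0 - E n) \<in> sets lebesgue" using meas meas0 by auto
    have m2: "(E0 - E n) \<union> (E n - E0) \<in> sets lebesgue" using meas meas0 by auto
    have e2: "emeasure lebesgue ((E0 - E n) \<union> (E n - E0)) < emeasure lebesgue (ball (0::'a) (d/2))"
      using elim(2) by (simp add: Un_commute)
    have h2: "hausdorff_dist (frontier E0) (frontier (E n)) < ennreal (d/2)"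
      using elim(1) hd_comm by metis
    have "\<forall>x\<in>E n. \<exists>y\<in>E0. dist x y < d"
      using one_side[OF dpos elim(2) m1 hd_lt[OF elim(1)]] by blast
    moreover have "\<forall>x\<in>E0. \<exists>y\<in>E n. dist x y < d"
      using one_side[OF dpos e2 m2 hd_lt[OF h2]] by blast
    ultimately have "hausdorff_dist (E n) E0 \<le> ennreal d" by (rule hd_le)
    then show ?case using dd d' by simp
  qed
qed


end
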